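(* Let $n\geq 4$ and $l=2^{n-2}-1$. Let $\Lambda$ be an $\mathcal{O}$-order with split semisimple $K$-span whose decomposition matrix is $D_0$; let $V_1,\dots,V_{6+l}$ be the simple $K\otimes\Lambda$-modules indexed according to the rows of $D_0$, and $P_1,P_2,P_3$ the projective indecomposable $\Lambda$-modules indexed according to the columns of $D_0$. Let $\varphi$ be an isometry of $K_0(K\otimes\Lambda)$ mapping the lattice $L=\langle [K\otimes P]\mid P \text{ a projective }\Lambda\text{-module}\rangle_{\mathbb Z}$ onto itself. Then $\varphi$ is a signed permutation of $\{[V_1],\dots,[V_{6+l}]\}$ lying in $$\langle \pm\mathrm{id},\ (2,3)(5,6),\ (-1,-4)(2,3)(-5)(-6),\ (2,4)(-1,-3)(-6)\rangle\cdot\mathrm{Sym}(\{7,\dots,6+l\}).$$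
   Context: $\mathcal{O}$ is a complete discrete valuation ring of characteristic $0$ with fraction field $K$ and algebraically closed residue field $k$ of characteristic $2$. $D_0$ is the $(6+l)\times3$ matrix with rows, in order, $(1,0,0),(0,1,0),(0,0,1),(1,1,1),(1,1,0),(1,0,1)$ followed by $l$ rows $(0,1,1)$; "decomposition matrix $D_0$" means the multiplicity of the $j$-th simple $k\otimes\Lambda$-module in the reduction of a full lattice in $V_i$ is $(D_0)_{ij}$, equivalently $[K\otimes P_j]=\sum_i (D_0)_{ij}[V_i]$. $K_0(K\otimes\Lambda)$ is the Grothendieck group, with the bilinear form for which $[V_1],\dots,[V_{6+l}]$ is an orthonormal basis. Signed permutation notation: a signed cycle $(i_1,\dots,i_k)$ with $i_j\in\pm\{1,\dots,6+l\}$ sends $[V_{|i_j|}]$ to $\operatorname{sgn}(i_{j+1})[V_{|i_{j+1}|}]$ (indices mod $k$), and fixes all $[V_m]$ with $m$ not occurring; e.g. $(-5)$ sends $[V_5]\mapsto-[V_5]$. $\mathrm{Sym}(\{7,\dots,6+l\})$ acts by permuting $[V_7],\dots,[V_{6+l}]$ without signs. *)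

theory Defs
  imports "HOL-Combinatorics.Permutations" "HOL-Library.Function_Algebras"
begin

text \<open>K_0(K \<otimes> Lambda) with the basis [V_1],...,[V_N] is modelled as the integer
  vectors v :: nat \<Rightarrow> int supported on {1..N}; v i is the coefficient of [V_i].\<close>

definition K0 :: "nat \<Rightarrow> (nat \<Rightarrow> int) set" where
  "K0 N = {v. \<forall>i. i \<notin> {1..N} \<longrightarrow> v i = 0}"

definition form :: "nat \<Rightarrow> (nat \<Rightarrow> int) \<Rightarrow> (nat \<Rightarrow> int) \<Rightarrow> int" where
  "form N v w = (\<Sum>i\<in>{1..N}. v i * w i)"

definition isometry :: "nat \<Rightarrow> ((nat \<Rightarrow> int) \<Rightarrow> (nat \<Rightarrow> int)) \<Rightarrow> bool" where
  "isometry N \<phi> \<longleftrightarrow> bij_betw \<phi> (K0 N) (K0 N)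
     \<and> (\<forall>v\<in>K0 N. \<forall>w\<in>K0 N. \<phi> (v + w) = \<phi> v + \<phi> w)
     \<and> (\<forall>v\<in>K0 N. \<forall>w\<in>K0 N. form N (\<phi> v) (\<phi> w) = form N v w)"

definition D0 :: "nat \<Rightarrow> nat \<Rightarrow> nat \<Rightarrow> int" where
  "D0 l i j = (if j \<notin> {1..3} then 0 else
     if i = 1 then (if j = 1 then 1 else 0) else
     if i = 2 then (if j = 2 then 1 else 0) else
     if i = 3 then (if j = 3 then 1 else 0) else
     if i = 4 then 1 else
     if i = 5 then (if j = 3 then 0 else 1) else
     if i = 6 then (if j = 2 then 0 else 1) else
     if 7 \<le> i \<and> i \<le> 6 + l then (if j = 1 then 0 else 1) else 0)"

text \<open>[K \<otimes> P_j] = sum_i (D_0)_{ij} [V_i].\<close>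
definition KP :: "nat \<Rightarrow> nat \<Rightarrow> (nat \<Rightarrow> int)" where
  "KP l j = (\<lambda>i. D0 l i j)"

text \<open>The lattice L spanned by the classes [K \<otimes> P] of projective Lambda-modules;
  every projective module is a direct sum of copies of P_1, P_2, P_3, so L is the
  Z-span of [K \<otimes> P_1], [K \<otimes> P_2], [K \<otimes> P_3].\<close>
definition proj_lattice :: "nat \<Rightarrow> (nat \<Rightarrow> int) set" where
  "proj_lattice l = {v. \<exists>c :: nat \<Rightarrow> int. v = (\<Sum>j\<in>{1..3}. (\<lambda>i. c j * KP l j i))}"

text \<open>Signed cycle (i_1,...,i_k), i_j nonzero integers: sends [V_|i_j|] to
  sgn(i_{j+1}) [V_|i_{j+1}|] (indices mod k), fixes the other [V_m].
  On coefficient vectors: the coefficient at |i_j| becomes sgn(i_j) times the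
  old coefficient at |i_{j-1}|.\<close>
definition signed_cycle :: "int list \<Rightarrow> (nat \<Rightarrow> int) \<Rightarrow> (nat \<Rightarrow> int)" where
  "signed_cycle c v = (\<lambda>m.
     if (\<exists>j<length c. nat \<bar>c ! j\<bar> = m)
     then (let j = (THE j. j < length c \<and> nat \<bar>c ! j\<bar> = m)
           in sgn (c ! j) * v (nat \<bar>c ! ((j + length c - 1) mod length c)\<bar>))
     else v m)"

definition signed_perm :: "int list list \<Rightarrow> (nat \<Rightarrow> int) \<Rightarrow> (nat \<Rightarrow> int)" where
  "signed_perm cs = foldr (\<lambda>c f. signed_cycle c \<circ> f) cs id"

definition gens :: "((nat \<Rightarrow> int) \<Rightarrow> (nat \<Rightarrow> int)) set" where
  "gens = {uminus,
           signed_perm [[2,3],[5,6]],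
           signed_perm [[-1,-4],[2,3],[-5],[-6]],
           signed_perm [[2,4],[-1,-3],[-6]]}"

text \<open>The group generated by gens (a finite group, so the generated monoid suffices).\<close>
inductive_set gen_group :: "((nat \<Rightarrow> int) \<Rightarrow> (nat \<Rightarrow> int)) set" where
  gen_id: "id \<in> gen_group"
| gen_step: "g \<in> gen_group \<Longrightarrow> h \<in> gens \<Longrightarrow> h \<circ> g \<in> gen_group"

text \<open>Action of a permutation pi of indices: [V_m] goes to [V_{pi m}].\<close>
definition perm_action :: "(nat \<Rightarrow> nat) \<Rightarrow> (nat \<Rightarrow> int) \<Rightarrow> (nat \<Rightarrow> int)" where
  "perm_action \<pi> v = v \<circ> inv \<pi>"

end

theory Submission
  imports Defs
begin


lemma sum3: "(\<Sum>j\<in>{1..3::nat}. f j) = f 1 + f 2 + f 3"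
proof -
  have "{1..3::nat} = {1,2,3}" by auto
  then show ?thesis by (simp add: add.assoc)
qed

lemma lat:
  assumes "w \<in> proj_lattice l"
  shows "w 4 = w 1 + w 2 + w 3 \<and> w 5 = w 1 + w 2 \<and> w 6 = w 1 + w 3 \<and>
         (\<forall>i. 7 \<le> i \<and> i \<le> 6 + l \<longrightarrow> w i = w 2 + w 3)"
proof -
  obtain c where c: "w = (\<Sum>j\<in>{1..3}. (\<lambda>i. c j * KP l j i))"
    using assms unfolding proj_lattice_def by blast
  have w: "w i = c 1 * D0 l i 1 + c 2 * D0 l i 2 + c 3 * D0 l i 3" for i
    unfolding c sum3 by (simp add: KP_def)
  show ?thesis unfolding w by (auto simp: D0_def)
qed

lemma KP_lat: "k \<in> {1..3} \<Longrightarrow> KP l k \<in> proj_lattice l"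
  unfolding proj_lattice_def mem_Collect_eq
  apply (rule exI[of _ "\<lambda>j. if j = k then 1 else 0"])
  apply (simp only: sum3)
  apply (auto simp: fun_eq_iff KP_def D0_def)
  done

lemma KP_K0: "KP l k \<in> K0 (6 + l)"
  unfolding K0_def KP_def D0_def by auto

definition ev :: "nat \<Rightarrow> nat \<Rightarrow> int" where "ev j = (\<lambda>i. if i = j then 1 else 0)"

lemma form_ev: "j \<in> {1..N} \<Longrightarrow> form N w (ev j) = w j"
  unfolding form_def ev_def by (simp add: if_distrib cong: if_cong)

lemma ev_K0: "j \<in> {1..N} \<Longrightarrow> ev j \<in> K0 N"
  unfolding K0_def ev_def by auto

lemma sq1:
  assumes "finite A" "(\<Sum>i\<in>A. (x i::int) * x i) = 1"
  shows "\<exists>k\<in>A. (x k = 1 \<or> x k = -1) \<and> (\<forall>i\<in>A. i \<noteq> k \<longrightarrow> x i = 0)"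
proof -
  have "\<exists>k\<in>A. x k \<noteq> 0"
  proof (rule ccontr)
    assume "\<not> ?thesis" then have "(\<Sum>i\<in>A. (x i::int) * x i) = 0" by simp
    with assms show False by simp
  qed
  then obtain k where k: "k \<in> A" "x k \<noteq> 0" by blast
  have sp: "(\<Sum>i\<in>A. x i * x i) = x k * x k + (\<Sum>i\<in>A - {k}. x i * x i)"
    using assms(1) k(1) by (simp add: sum.remove)
  have nn: "(\<Sum>i\<in>A - {k}. x i * x i) \<ge> 0" by (simp add: sum_nonneg)
  have "x k * x k \<ge> 1" using k(2)
    by (smt (verit) mult_le_cancel_right1 mult_minus_left zero_less_mult_iff)
  then have kk: "x k * x k = 1" and r: "(\<Sum>i\<in>A - {k}. x i * x i) = 0"
    using sp nn assms(2) by linarith+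
  have "x k = 1 \<or> x k = -1" using kk
    by (metis zmult_eq_1_iff)
  moreover have "\<forall>i\<in>A. i \<noteq> k \<longrightarrow> x i = 0"
  proof (intro ballI impI)
    fix i assume "i \<in> A" "i \<noteq> k"
    with r assms(1) have "x i * x i = 0"
      using sum_nonneg_eq_0_iff[of "A - {k}" "\<lambda>i. x i * x i"] by auto
    then show "x i = 0" by simp
  qed
  ultimately show ?thesis using k(1) by blast
qed


lemma iso_signed:
  assumes iso: "isometry N \<phi>"
  shows "\<exists>\<tau> s. bij_betw \<tau> {1..N} {1..N} \<and> (\<forall>j\<in>{1..N}. s j = 1 \<or> s j = -1) \<and>
     (\<forall>v\<in>K0 N. \<forall>j\<in>{1..N}. \<phi> v j = s j * v (\<tau> j)) \<and>
     (\<forall>v\<in>K0 N. \<forall>j. j \<notin> {1..N} \<longrightarrow> \<phi> v j = 0)"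
proof -
  have bij: "bij_betw \<phi> (K0 N) (K0 N)"
    and fp: "\<And>v w. v \<in> K0 N \<Longrightarrow> w \<in> K0 N \<Longrightarrow> form N (\<phi> v) (\<phi> w) = form N v w"
    using iso unfolding isometry_def by auto
  have ex: "\<exists>k s u. k \<in> {1..N} \<and> (s = 1 \<or> s = -1) \<and> u \<in> K0 N \<and> \<phi> u = ev j \<and> u k = s \<and>
             (\<forall>v\<in>K0 N. \<phi> v j = s * v k)" if j: "j \<in> {1..N}" for j
  proof -
    have "ev j \<in> \<phi> ` K0 N" using bij ev_K0[OF j] by (simp add: bij_betw_def)
    then obtain u where u: "u \<in> K0 N" "\<phi> u = ev j" by auto
    have "form N u u = 1" using fp[OF u(1) u(1)] u(2) form_ev[OF j, of "ev j"] by (simp add: ev_def)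
    then obtain k where k: "k \<in> {1..N}" "u k = 1 \<or> u k = -1" "\<forall>i\<in>{1..N}. i \<noteq> k \<longrightarrow> u i = 0"
      using sq1[of "{1..N}" u] unfolding form_def by auto
    have "\<phi> v j = u k * v k" if v: "v \<in> K0 N" for v
    proof -
      have "\<phi> v j = form N (\<phi> v) (\<phi> u)" using u(2) form_ev[OF j] by simp
      also have "\<dots> = form N v u" using fp v u(1) by simp
      also have "\<dots> = (\<Sum>i\<in>{1..N}. if i = k then v k * u k else 0)"
        unfolding form_def by (rule sum.cong) (use k(3) in auto)
      also have "\<dots> = u k * v k" using k(1) by simp
      finally show ?thesis .
    qed
    then show ?thesis using k u by blast
  qed
  then obtain \<tau> s u where P: "\<And>j. j \<in> {1..N} \<Longrightarrow> \<tau> j \<in> {1..N} \<and> (s j = 1 \<or> s j = -1) \<and> u j \<in> K0 N \<and> \<phi> (u j) = ev j \<and> u j (\<tau> j) = s j \<and>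
             (\<forall>v\<in>K0 N. \<phi> v j = s j * v (\<tau> j))"
    by metis
  have inj: "inj_on \<tau> {1..N}"
  proof (rule inj_onI)
    fix i j assume i: "i \<in> {1..N}" and j: "j \<in> {1..N}" and e: "\<tau> i = \<tau> j"
    show "i = j"
    proof (rule ccontr)
      assume ne: "i \<noteq> j"
      have "\<phi> (u i) j = s j * u i (\<tau> j)" using P[OF i] P[OF j] by blast
      also have "\<dots> = s j * s i" using P[OF i] e by simp
      finally have "ev i j = s j * s i" using P[OF i] by simp
      then show False using ne P[OF i] P[OF j] by (auto simp: ev_def)
    qed
  qed
  have "\<tau> ` {1..N} = {1..N}"
    by (rule endo_inj_surj) (use P inj in auto)
  then have "bij_betw \<tau> {1..N} {1..N}" using inj by (simp add: bij_betw_def)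
  moreover have "\<forall>v\<in>K0 N. \<forall>j. j \<notin> {1..N} \<longrightarrow> \<phi> v j = 0"
    using bij unfolding bij_betw_def K0_def by blast
  ultimately show ?thesis using P by blast
qed



definition spl :: "nat list \<Rightarrow> int list \<Rightarrow> int \<Rightarrow> (nat \<Rightarrow> int) \<Rightarrow> (nat \<Rightarrow> int)" where
  "spl ps es c w = (\<lambda>i. if 1 \<le> i \<and> i \<le> 6 then es ! (i - 1) * w (ps ! (i - 1)) else c * w i)"

lemma spl_comp:
  assumes "length ps = 6" "set ps \<subseteq> {1..6}"
  shows "spl ps es c \<circ> spl qs fs d = spl (map (\<lambda>p. qs ! (p - 1)) ps) (map (\<lambda>k. es ! k * fs ! (ps ! k - 1)) [0..<6]) (c * d)"
proof -
  have "ps ! (i - 1) \<in> {1..6}" if "1 \<le> i" "i \<le> 6" for i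
  proof -
    have "ps ! (i - 1) \<in> set ps" using assms(1) that by simp
    then show ?thesis using assms(2) by blast
  qed
  then show ?thesis using assms(1)
    by (auto simp: spl_def fun_eq_iff)
qed

lemma sc2:
  assumes "nat \<bar>a\<bar> \<noteq> nat \<bar>b\<bar>"
  shows "signed_cycle [a, b] v = (\<lambda>m. if m = nat \<bar>a\<bar> then sgn a * v (nat \<bar>b\<bar>)
     else if m = nat \<bar>b\<bar> then sgn b * v (nat \<bar>a\<bar>) else v m)"
proof -
  have ex: "(\<exists>j<length [a,b]. nat \<bar>[a,b] ! j\<bar> = m) \<longleftrightarrow> m = nat \<bar>a\<bar> \<or> m = nat \<bar>b\<bar>" for m
    by (auto simp: less_Suc_eq numeral_2_eq_2)
  have t0: "(THE j. j < length [a,b] \<and> nat \<bar>[a,b] ! j\<bar> = nat \<bar>a\<bar>) = 0"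
    by (rule the_equality) (use assms in \<open>auto simp: less_Suc_eq numeral_2_eq_2\<close>)
  have t1: "(THE j. j < length [a,b] \<and> nat \<bar>[a,b] ! j\<bar> = nat \<bar>b\<bar>) = 1"
    by (rule the_equality) (use assms in \<open>auto simp: less_Suc_eq numeral_2_eq_2\<close>)
  show ?thesis
    unfolding signed_cycle_def ex using assms by (auto simp: fun_eq_iff t0[simplified] t1[simplified] Let_def)
qed

lemma sc1: "signed_cycle [a] v = (\<lambda>m. if m = nat \<bar>a\<bar> then sgn a * v m else v m)"
proof -
  have t: "(THE j. j = 0 \<and> nat \<bar>[a] ! j\<bar> = nat \<bar>a\<bar>) = 0" by (rule the_equality) auto
  show ?thesis unfolding signed_cycle_def by (auto simp: fun_eq_iff Let_def t)
qed

lemma genU: "uminus = spl [1,2,3,4,5,6] [-1,-1,-1,-1,-1,-1] (-1)"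
  by (auto simp: spl_def fun_eq_iff numeral_eq_Suc le_Suc_eq)

lemma genA: "signed_perm [[2,3],[5,6]] = spl [1,3,2,4,6,5] [1,1,1,1,1,1] 1"
  unfolding signed_perm_def
  by (auto simp: sc2 sc1 spl_def fun_eq_iff numeral_eq_Suc le_Suc_eq)

lemma genB: "signed_perm [[-1,-4],[2,3],[-5],[-6]] = spl [4,3,2,1,5,6] [-1,1,1,-1,-1,-1] 1"
  unfolding signed_perm_def
  by (auto simp: sc2 sc1 spl_def fun_eq_iff numeral_eq_Suc le_Suc_eq)

lemma genC: "signed_perm [[2,4],[-1,-3],[-6]] = spl [3,4,1,2,5,6] [-1,1,-1,1,1,-1] 1"
  unfolding signed_perm_def
  by (auto simp: sc2 sc1 spl_def fun_eq_iff numeral_eq_Suc le_Suc_eq)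

lemma genI: "id = spl [1,2,3,4,5,6] [1,1,1,1,1,1] 1"
  by (auto simp: spl_def fun_eq_iff numeral_eq_Suc le_Suc_eq)

lemma upt6: "[0..<6] = [0,1,2,3,4,5::nat]" by (simp add: upt_rec)

lemma g_: "spl [1,2,3,4,5,6] [1,1,1,1,1,1] (1) \<in> gen_group"
  unfolding genI[symmetric] by (rule gen_id)

lemma g_U: "spl [1,2,3,4,5,6] [-1,-1,-1,-1,-1,-1] (-1) \<in> gen_group"
proof -
  have "uminus \<circ> spl [1,2,3,4,5,6] [1,1,1,1,1,1] (1) \<in> gen_group" by (rule gen_step[OF g_]) (simp add: gens_def)
  then show ?thesis unfolding genU by (simp add: spl_comp upt6)
qed

lemma g_A: "spl [1,3,2,4,6,5] [1,1,1,1,1,1] (1) \<in> gen_group"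
proof -
  have "signed_perm [[2,3],[5,6]] \<circ> spl [1,2,3,4,5,6] [1,1,1,1,1,1] (1) \<in> gen_group" by (rule gen_step[OF g_]) (simp add: gens_def)
  then show ?thesis unfolding genA by (simp add: spl_comp upt6)
qed

lemma g_B: "spl [4,3,2,1,5,6] [-1,1,1,-1,-1,-1] (1) \<in> gen_group"
proof -
  have "signed_perm [[-1,-4],[2,3],[-5],[-6]] \<circ> spl [1,2,3,4,5,6] [1,1,1,1,1,1] (1) \<in> gen_group" by (rule gen_step[OF g_]) (simp add: gens_def)
  then show ?thesis unfolding genB by (simp add: spl_comp upt6)
qed

lemma g_C: "spl [3,4,1,2,5,6] [-1,1,-1,1,1,-1] (1) \<in> gen_group"
proof -
  have "signed_perm [[2,4],[-1,-3],[-6]] \<circ> spl [1,2,3,4,5,6] [1,1,1,1,1,1] (1) \<in> gen_group" by (rule gen_step[OF g_]) (simp add: gens_def)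
  then show ?thesis unfolding genC by (simp add: spl_comp upt6)
qed

lemma g_UA: "spl [1,3,2,4,6,5] [-1,-1,-1,-1,-1,-1] (-1) \<in> gen_group"
proof -
  have "signed_perm [[2,3],[5,6]] \<circ> spl [1,2,3,4,5,6] [-1,-1,-1,-1,-1,-1] (-1) \<in> gen_group" by (rule gen_step[OF g_U]) (simp add: gens_def)
  then show ?thesis unfolding genA by (simp add: spl_comp upt6)
qed

lemma g_UB: "spl [4,3,2,1,5,6] [1,-1,-1,1,1,1] (-1) \<in> gen_group"
proof -
  have "signed_perm [[-1,-4],[2,3],[-5],[-6]] \<circ> spl [1,2,3,4,5,6] [-1,-1,-1,-1,-1,-1] (-1) \<in> gen_group" by (rule gen_step[OF g_U]) (simp add: gens_def)
  then show ?thesis unfolding genB by (simp add: spl_comp upt6)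
qed

lemma g_UC: "spl [3,4,1,2,5,6] [1,-1,1,-1,-1,1] (-1) \<in> gen_group"
proof -
  have "signed_perm [[2,4],[-1,-3],[-6]] \<circ> spl [1,2,3,4,5,6] [-1,-1,-1,-1,-1,-1] (-1) \<in> gen_group" by (rule gen_step[OF g_U]) (simp add: gens_def)
  then show ?thesis unfolding genC by (simp add: spl_comp upt6)
qed

lemma g_AB: "spl [4,2,3,1,6,5] [-1,1,1,-1,-1,-1] (1) \<in> gen_group"
proof -
  have "signed_perm [[-1,-4],[2,3],[-5],[-6]] \<circ> spl [1,3,2,4,6,5] [1,1,1,1,1,1] (1) \<in> gen_group" by (rule gen_step[OF g_A]) (simp add: gens_def)
  then show ?thesis unfolding genB by (simp add: spl_comp upt6)
qed

lemma g_AC: "spl [2,4,1,3,6,5] [-1,1,-1,1,1,-1] (1) \<in> gen_group"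
proof -
  have "signed_perm [[2,4],[-1,-3],[-6]] \<circ> spl [1,3,2,4,6,5] [1,1,1,1,1,1] (1) \<in> gen_group" by (rule gen_step[OF g_A]) (simp add: gens_def)
  then show ?thesis unfolding genC by (simp add: spl_comp upt6)
qed

lemma g_BC: "spl [2,1,4,3,5,6] [-1,-1,1,1,-1,1] (1) \<in> gen_group"
proof -
  have "signed_perm [[2,4],[-1,-3],[-6]] \<circ> spl [4,3,2,1,5,6] [-1,1,1,-1,-1,-1] (1) \<in> gen_group" by (rule gen_step[OF g_B]) (simp add: gens_def)
  then show ?thesis unfolding genC by (simp add: spl_comp upt6)
qed

lemma g_CA: "spl [3,1,4,2,6,5] [-1,-1,1,1,-1,1] (1) \<in> gen_group"
proof -
  have "signed_perm [[2,3],[5,6]] \<circ> spl [3,4,1,2,5,6] [-1,1,-1,1,1,-1] (1) \<in> gen_group" by (rule gen_step[OF g_C]) (simp add: gens_def)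
  then show ?thesis unfolding genA by (simp add: spl_comp upt6)
qed

lemma g_UAB: "spl [4,2,3,1,6,5] [1,-1,-1,1,1,1] (-1) \<in> gen_group"
proof -
  have "signed_perm [[-1,-4],[2,3],[-5],[-6]] \<circ> spl [1,3,2,4,6,5] [-1,-1,-1,-1,-1,-1] (-1) \<in> gen_group" by (rule gen_step[OF g_UA]) (simp add: gens_def)
  then show ?thesis unfolding genB by (simp add: spl_comp upt6)
qed

lemma g_UAC: "spl [2,4,1,3,6,5] [1,-1,1,-1,-1,1] (-1) \<in> gen_group"
proof -
  have "signed_perm [[2,4],[-1,-3],[-6]] \<circ> spl [1,3,2,4,6,5] [-1,-1,-1,-1,-1,-1] (-1) \<in> gen_group" by (rule gen_step[OF g_UA]) (simp add: gens_def)
  then show ?thesis unfolding genC by (simp add: spl_comp upt6)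
qed

lemma g_UBC: "spl [2,1,4,3,5,6] [1,1,-1,-1,1,-1] (-1) \<in> gen_group"
proof -
  have "signed_perm [[2,4],[-1,-3],[-6]] \<circ> spl [4,3,2,1,5,6] [1,-1,-1,1,1,1] (-1) \<in> gen_group" by (rule gen_step[OF g_UB]) (simp add: gens_def)
  then show ?thesis unfolding genC by (simp add: spl_comp upt6)
qed

lemma g_UCA: "spl [3,1,4,2,6,5] [1,1,-1,-1,1,-1] (-1) \<in> gen_group"
proof -
  have "signed_perm [[2,3],[5,6]] \<circ> spl [3,4,1,2,5,6] [1,-1,1,-1,-1,1] (-1) \<in> gen_group" by (rule gen_step[OF g_UC]) (simp add: gens_def)
  then show ?thesis unfolding genA by (simp add: spl_comp upt6)
qed


definition SOLS :: "(nat list \<times> int list \<times> int) list" where "SOLS = [([1,2,3,4,5,6],[1,1,1,1,1,1],1), ([1,2,3,4,5,6],[-1,-1,-1,-1,-1,-1],-1), ([1,3,2,4,6,5],[1,1,1,1,1,1],1), ([4,3,2,1,5,6],[-1,1,1,-1,-1,-1],1), ([3,4,1,2,5,6],[-1,1,-1,1,1,-1],1), ([1,3,2,4,6,5],[-1,-1,-1,-1,-1,-1],-1), ([4,3,2,1,5,6],[1,-1,-1,1,1,1],-1), ([3,4,1,2,5,6],[1,-1,1,-1,-1,1],-1), ([4,2,3,1,6,5],[-1,1,1,-1,-1,-1],1), ([2,4,1,3,6,5],[-1,1,-1,1,1,-1],1), ([2,1,4,3,5,6],[-1,-1,1,1,-1,1],1), ([3,1,4,2,6,5],[-1,-1,1,1,-1,1],1),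 ([4,2,3,1,6,5],[1,-1,-1,1,1,1],-1), ([2,4,1,3,6,5],[1,-1,1,-1,-1,1],-1), ([2,1,4,3,5,6],[1,1,-1,-1,1,-1],-1), ([3,1,4,2,6,5],[1,1,-1,-1,1,-1],-1)]"

definition S6 :: "nat set" where "S6 = {1..6}"
definition SG :: "int set" where "SG = {1, -1}"

lemma S6E: "a \<in> S6 \<Longrightarrow> (a = 1 \<Longrightarrow> P) \<Longrightarrow> (a = 2 \<Longrightarrow> P) \<Longrightarrow> (a = 3 \<Longrightarrow> P) \<Longrightarrow>
  (a = 4 \<Longrightarrow> P) \<Longrightarrow> (a = 5 \<Longrightarrow> P) \<Longrightarrow> (a = 6 \<Longrightarrow> P) \<Longrightarrow> P"
  unfolding S6_def by (cases a; auto simp: numeral_eq_Suc le_Suc_eq)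

lemma SGE: "a \<in> SG \<Longrightarrow> (a = 1 \<Longrightarrow> P) \<Longrightarrow> (a = -1 \<Longrightarrow> P) \<Longrightarrow> P"
  unfolding SG_def by auto

lemma D0v: "D0 l 1 1 = 1" "D0 l 1 2 = 0" "D0 l 1 3 = 0" "D0 l 2 1 = 0" "D0 l 2 2 = 1" "D0 l 2 3 = 0" "D0 l 3 1 = 0" "D0 l 3 2 = 0" "D0 l 3 3 = 1" "D0 l 4 1 = 1" "D0 l 4 2 = 1" "D0 l 4 3 = 1" "D0 l 5 1 = 1" "D0 l 5 2 = 1" "D0 l 5 3 = 0" "D0 l 6 1 = 1" "D0 l 6 2 = 0" "D0 l 6 3 = 1"
  by (simp_all add: D0_def)

lemma D0v2: "D0 l (Suc 0) (Suc 0) = 1" "D0 l (Suc 0) 2 = 0" "D0 l (Suc 0) 3 = 0" "D0 l 2 (Suc 0) = 0" "D0 l 3 (Suc 0) = 0" "D0 l 4 (Suc 0) = 1" "D0 l 5 (Suc 0) = 1" "D0 l 6 (Suc 0) = 1"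
  by (simp_all add: D0_def)

lemma fin:
  "a1 \<in> S6 \<Longrightarrow> a2 \<in> S6 \<Longrightarrow> a3 \<in> S6 \<Longrightarrow> a4 \<in> S6 \<Longrightarrow> a5 \<in> S6 \<Longrightarrow> a6 \<in> S6 \<Longrightarrow>
   distinct [a1,a2,a3,a4,a5,a6] \<Longrightarrow>
   s1 \<in> SG \<Longrightarrow> s2 \<in> SG \<Longrightarrow> s3 \<in> SG \<Longrightarrow> s4 \<in> SG \<Longrightarrow> s5 \<in> SG \<Longrightarrow> s6 \<in> SG \<Longrightarrow> t \<in> SG \<Longrightarrow>
   t * 0 = s2 * D0 l a2 1 + s3 * D0 l a3 1 \<Longrightarrow>
   t * 1 = s2 * D0 l a2 2 + s3 * D0 l a3 2 \<Longrightarrow>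
   t * 1 = s2 * D0 l a2 3 + s3 * D0 l a3 3 \<Longrightarrow>
   s5 * D0 l a5 1 = s1 * D0 l a1 1 + s2 * D0 l a2 1 \<Longrightarrow>
   s5 * D0 l a5 2 = s1 * D0 l a1 2 + s2 * D0 l a2 2 \<Longrightarrow>
   s5 * D0 l a5 3 = s1 * D0 l a1 3 + s2 * D0 l a2 3 \<Longrightarrow>
   s6 * D0 l a6 1 = s1 * D0 l a1 1 + s3 * D0 l a3 1 \<Longrightarrow>
   s6 * D0 l a6 2 = s1 * D0 l a1 2 + s3 * D0 l a3 2 \<Longrightarrow>
   s6 * D0 l a6 3 = s1 * D0 l a1 3 + s3 * D0 l a3 3 \<Longrightarrow>
   s4 * D0 l a4 1 = s1 * D0 l a1 1 + s2 * D0 l a2 1 + s3 * D0 l a3 1 \<Longrightarrow>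
   s4 * D0 l a4 2 = s1 * D0 l a1 2 + s2 * D0 l a2 2 + s3 * D0 l a3 2 \<Longrightarrow>
   s4 * D0 l a4 3 = s1 * D0 l a1 3 + s2 * D0 l a2 3 + s3 * D0 l a3 3 \<Longrightarrow>
   ([a1,a2,a3,a4,a5,a6], [s1,s2,s3,s4,s5,s6], t) \<in> set SOLS"
  apply (erule S6E[where a=a2]; erule S6E[where a=a3]; erule SGE[where a=s2]; erule SGE[where a=s3];
         erule SGE[where a=t]; simp add: D0v D0v2;
         erule S6E[where a=a1]; erule SGE[where a=s1]; erule S6E[where a=a5]; erule SGE[where a=s5]; simp add: D0v D0v2;
         erule S6E[where a=a6]; erule SGE[where a=s6]; simp add: D0v D0v2;
         erule S6E[where a=a4]; erule SGE[where a=s4]; simp add: D0v D0v2 SOLS_def)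
  done

lemma SOLS_gen: "(ps, es, c) \<in> set SOLS \<Longrightarrow> spl ps es c \<in> gen_group"
  using g_ g_U g_A g_B g_C g_UA g_UB g_UC g_AB g_AC g_BC g_CA g_UAB g_UAC g_UBC g_UCA by (auto simp: SOLS_def)

lemma tailrow:
  assumes "p \<in> {1..6+l}" "q \<in> {1..6+l}" "p \<noteq> q" "s = 1 \<or> s = -1" "s' = 1 \<or> s' = (-1::int)"
    "s * D0 l p 1 = s' * D0 l q 1" "s * D0 l p 2 = s' * D0 l q 2" "s * D0 l p 3 = s' * D0 l q 3"
  shows "7 \<le> p \<and> 7 \<le> q \<and> s = s'"
proof -
  have c: "x = 1 \<or> x = 2 \<or> x = 3 \<or> x = 4 \<or> x = 5 \<or> x = 6 \<or> (7 \<le> x \<and> x \<le> 6 + l)"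
    if "x \<in> {1..6+l}" for x using that by auto
  show ?thesis
    using c[OF assms(1)] c[OF assms(2)] assms(3-)
    by (elim disjE; auto simp: D0_def)
qed

theorem proposition5p1:
  fixes n l :: nat and \<phi> :: "(nat \<Rightarrow> int) \<Rightarrow> (nat \<Rightarrow> int)"
  assumes "n \<ge> 4"
    and "l = 2 ^ (n - 2) - 1"
    and "isometry (6 + l) \<phi>"
    and "\<phi> ` proj_lattice l = proj_lattice l"
  shows "\<exists>g\<in>gen_group. \<exists>\<pi>. \<pi> permutes {7..6 + l} \<and>
           (\<forall>v\<in>K0 (6 + l). \<phi> v = g (perm_action \<pi> v))"
proof -
  define N where "N = 6 + l"
  have "(2::nat) ^ 2 \<le> 2 ^ (n - 2)" by (rule power_increasing) (use assms(1) in auto)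
  then have l3: "l \<ge> 3" using assms(2) by simp
  obtain \<tau> s where bij: "bij_betw \<tau> {1..N} {1..N}" and sg: "\<forall>j\<in>{1..N}. s j = 1 \<or> s j = -1"
    and ph: "\<forall>v\<in>K0 N. \<forall>j\<in>{1..N}. \<phi> v j = s j * v (\<tau> j)"
    and ph0: "\<forall>v\<in>K0 N. \<forall>j. j \<notin> {1..N} \<longrightarrow> \<phi> v j = 0"
    using iso_signed[OF assms(3)] unfolding N_def by blast
  have inj: "inj_on \<tau> {1..N}" and tin: "\<And>j. j \<in> {1..N} \<Longrightarrow> \<tau> j \<in> {1..N}"
    using bij by (auto simp: bij_betw_def)
  define E where "E k i = s i * D0 l (\<tau> i) k" for k i
  have EQ: "E k 4 = E k 1 + E k 2 + E k 3 \<and> E k 5 = E k 1 + E k 2 \<and> E k 6 = E k 1 + E k 3 \<and>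
         (\<forall>i. 7 \<le> i \<and> i \<le> N \<longrightarrow> E k i = E k 2 + E k 3)" if k: "k \<in> {1..3}" for k
  proof -
    have "\<phi> (KP l k) \<in> proj_lattice l" using assms(4) KP_lat[OF k] by blast
    note L = lat[OF this]
    have e: "\<phi> (KP l k) i = E k i" if "i \<in> {1..N}" for i
      using ph KP_K0[of l k] that unfolding E_def N_def by (simp add: KP_def)
    show ?thesis using L e unfolding N_def by auto
  qed
  have EQ1: "E 1 4 = E 1 1 + E 1 2 + E 1 3 \<and> E 1 5 = E 1 1 + E 1 2 \<and> E 1 6 = E 1 1 + E 1 3 \<and>
         (\<forall>i. 7 \<le> i \<and> i \<le> N \<longrightarrow> E 1 i = E 1 2 + E 1 3)" by (rule EQ) simp
  have EQ2: "E 2 4 = E 2 1 + E 2 2 + E 2 3 \<and> E 2 5 = E 2 1 + E 2 2 \<and> E 2 6 = E 2 1 + E 2 3 \<and>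
         (\<forall>i. 7 \<le> i \<and> i \<le> N \<longrightarrow> E 2 i = E 2 2 + E 2 3)" by (rule EQ) simp
  have EQ3: "E 3 4 = E 3 1 + E 3 2 + E 3 3 \<and> E 3 5 = E 3 1 + E 3 2 \<and> E 3 6 = E 3 1 + E 3 3 \<and>
         (\<forall>i. 7 \<le> i \<and> i \<le> N \<longrightarrow> E 3 i = E 3 2 + E 3 3)" by (rule EQ) simp
  have tail: "7 \<le> \<tau> i \<and> s i = s 7" if i: "i \<in> {7..N}" for i
  proof -
    define i' where "i' = (if i = 7 then 8 else (7::nat))"
    have i': "i' \<in> {7..N}" "i' \<noteq> i" using i l3 unfolding i'_def N_def by auto
    have ne: "\<tau> i \<noteq> \<tau> i'" using inj i i' by (auto dest: inj_onD)
    have "E k i = E k i'" if "k \<in> {1..3}" for k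
      using EQ[OF that] i i' by auto
    then have "7 \<le> \<tau> i \<and> 7 \<le> \<tau> i' \<and> s i = s i'"
      using tailrow[of "\<tau> i" l "\<tau> i'" "s i" "s i'"] tin[of i] tin[of i'] ne sg i i'
      unfolding E_def N_def by auto
    then show ?thesis unfolding i'_def by (auto split: if_splits)
  qed
  have tsub: "\<tau> ` {7..N} \<subseteq> {7..N}" using tail tin by force
  have tinj: "inj_on \<tau> {7..N}" using inj by (rule inj_on_subset) auto
  have timg: "\<tau> ` {7..N} = {7..N}" by (rule endo_inj_surj[OF _ tsub tinj]) simp
  have small: "\<tau> j \<in> S6" if j: "j \<in> {1..6}" for j
  proof (rule ccontr)
    assume "\<tau> j \<notin> S6"
    then have "\<tau> j \<in> {7..N}" using tin[of j] j unfolding S6_def N_def by auto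
    then have "\<tau> j \<in> \<tau> ` {7..N}" using timg by simp
    then obtain i where "i \<in> {7..N}" "\<tau> j = \<tau> i" unfolding image_iff by blast
    then show False using inj j unfolding N_def by (auto dest: inj_onD)
  qed
  have dist: "distinct [\<tau> 1, \<tau> 2, \<tau> 3, \<tau> 4, \<tau> 5, \<tau> 6]"
    using inj unfolding N_def by (auto dest: inj_onD)
  have sgs: "s j \<in> SG" if "j \<in> {1..N}" for j using sg that unfolding SG_def by auto
  have t7: "D0 l (\<tau> 7) 1 = 0" "D0 l (\<tau> 7) 2 = 1" "D0 l (\<tau> 7) 3 = 1"
    using tail[of 7] tin[of 7] l3 unfolding N_def by (auto simp: D0_def)
  have mem: "([\<tau> 1, \<tau> 2, \<tau> 3, \<tau> 4, \<tau> 5, \<tau> 6], [s 1, s 2, s 3, s 4, s 5, s 6], s 7) \<in> set SOLS"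
    apply (rule fin[OF small small small small small small dist sgs sgs sgs sgs sgs sgs sgs])
    using EQ1 EQ2 EQ3 l3 t7 unfolding E_def N_def by (auto simp: algebra_simps)
  define ps where "ps = [\<tau> 1, \<tau> 2, \<tau> 3, \<tau> 4, \<tau> 5, \<tau> 6]"
  define es where "es = [s 1, s 2, s 3, s 4, s 5, s 6]"
  have g: "spl ps es (s 7) \<in> gen_group" using SOLS_gen mem unfolding ps_def es_def by blast
  define \<pi>' where "\<pi>' = (\<lambda>i. if i \<in> {7..N} then \<tau> i else i)"
  have "bij_betw \<pi>' {7..N} {7..N}"
    using tinj timg unfolding bij_betw_def \<pi>'_def by (auto simp: inj_on_def)
  then have pp: "\<pi>' permutes {7..N}"
    by (rule bij_imp_permutes) (auto simp: \<pi>'_def)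
  define \<pi> where "\<pi> = inv \<pi>'"
  have pperm: "\<pi> permutes {7..N}" unfolding \<pi>_def by (rule permutes_inv[OF pp])
  have ipi: "inv \<pi> = \<pi>'" unfolding \<pi>_def by (rule inv_inv_eq[OF permutes_bij[OF pp]])
  have fin6: "\<pi>' (\<tau> j) = \<tau> j" if "j \<in> {1..6}" for j
    using small[OF that] unfolding \<pi>'_def S6_def by auto
  have main: "\<phi> v = spl ps es (s 7) (perm_action \<pi> v)" if v: "v \<in> K0 N" for v
  proof
    fix i
    show "\<phi> v i = spl ps es (s 7) (perm_action \<pi> v) i"
    proof (cases "i \<in> {1..6}")
      case True
      then have "i = 1 \<or> i = 2 \<or> i = 3 \<or> i = 4 \<or> i = 5 \<or> i = 6" by auto
      then show ?thesis using ph v fin6 unfolding spl_def perm_action_def ipi ps_def es_def N_def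
        by (elim disjE) auto
    next
      case False
      show ?thesis
      proof (cases "i \<in> {7..N}")
        case True
        then show ?thesis using ph v tail[OF True] False unfolding spl_def perm_action_def ipi \<pi>'_def N_def
          by auto
      next
        case F2: False
        then have "i \<notin> {1..N}" using False by auto
        then show ?thesis using ph0 v False F2 unfolding spl_def perm_action_def ipi \<pi>'_def K0_def
          by auto
      qed
    qed
  qed
  show ?thesis using g pperm main unfolding N_def by blast
qed

end
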